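(* Let $F,\tilde F$ be finitely supported sequences on $\mathbb Z$ whose supports lie entirely to the left of the supports of finitely supported sequences $G,\tilde G$ (i.e. every index in the support of $F$ or $\tilde F$ is smaller than every index in the support of $G$ or $\tilde G$). Let $(a,b),(\tilde a,\tilde b),(c,d),(\tilde c,\tilde d)$ be the nonlinear Fourier series of $F,\tilde F,G,\tilde G$ respectively. Then $$\rho\bigl((a,b)(c,d),(\tilde a,\tilde b)(\tilde c,\tilde d)\bigr)\le 2\rho\bigl((a,b),(\tilde a,\tilde b)\bigr)+2\rho\bigl((c,d),(\tilde c,\tilde d)\bigr).$$
   Context: $\mathbb T$ is the unit circle, $\mathbb D$ the open unit disc, $\mathbb D^*=\{\overline z^{-1}:z\in\mathbb D\}$ (including $\infty$), and $a^*(z)=\overline{a(\overline z^{-1})}$ (so $a^*=\overline a$ on $\mathbb T$). $\int_{\mathbb T}a=\int_0^1a(e^{2\pi i\theta})d\theta$. $H^2(\mathbb D)$ is the space of $f\in L^2(\mathbb T)$ whose Fourier coefficients vanish at negative indices; $H^2(\mathbb D^* )$ is the space of $f$ with $f^*\in H^2(\mathbb D)$, and for such $f$, $f(\infty):=\overline{f^*(0)}=\int_{\mathbb T}f$. For a finitely supported $F$, its nonlinear Fourier series $(a,b)$ is the first row of the ordered product $\prod_k(1+|F_k|^2)^{-1/2}\begin{pmatrix}1&F_kz^k\\-\overline{F_k}z^{-k}&1\end{pmatrix}$ ($k$ increasing left to right). Pairs are multiplied as $(a,b)(c,d)=(ac-bd^*,ad+bc^* )$ (the first row of the product of the matrices $\begin{pmatrix}a&b\\-b^*&a^*\end{pmatrix}\begin{pmatrix}c&d\\-d^*&c^*\end{pmatrix}$).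 $\mathbf L$ is the set of pairs $(a,b)$ of measurable functions on $\mathbb T$ with $aa^*+bb^*=1$ a.e. on $\mathbb T$, $a\in H^2(\mathbb D^* )$ and $a(\infty)>0$; it carries the metric $\rho((a,b),(c,d))=\|a-c\|_{L^2(\mathbb T)}+\|b-d\|_{L^2(\mathbb T)}+|\log a(\infty)-\log c(\infty)|$. Nonlinear Fourier series of finitely supported sequences lie in $\mathbf L$. *)

theory Defs
  imports "HOL-Analysis.Analysis"
begin

text \<open>Pairs (a,b) are represented as pairs of functions on the punctured plane
  (the nonlinear Fourier series of a finitely supported sequence is a pair of
  Laurent polynomials); only their values on the unit circle enter the metric.\<close>

type_synonym nlpair = "(complex \<Rightarrow> complex) \<times> (complex \<Rightarrow> complex)"

definition star :: "(complex \<Rightarrow> complex) \<Rightarrow> complex \<Rightarrow> complex" where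
  "star f = (\<lambda>z. cnj (f (inverse (cnj z))))"

definition pmult :: "nlpair \<Rightarrow> nlpair \<Rightarrow> nlpair" where
  "pmult p q = (case p of (a, b) \<Rightarrow> case q of (c, d) \<Rightarrow>
      ((\<lambda>z. a z * c z - b z * star d z), (\<lambda>z. a z * d z + b z * star c z)))"

definition supp :: "(int \<Rightarrow> complex) \<Rightarrow> int set" where
  "supp F = {k. F k \<noteq> 0}"

text \<open>First row of the k-th factor
  (1+|F_k|^2)^(-1/2) [[1, F_k z^k], [-conj F_k z^(-k), 1]].\<close>
definition nlft_factor :: "(int \<Rightarrow> complex) \<Rightarrow> int \<Rightarrow> nlpair" where
  "nlft_factor F k =
     ((\<lambda>z. complex_of_real (1 / sqrt (1 + (cmod (F k))\<^sup>2))),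
      (\<lambda>z. complex_of_real (1 / sqrt (1 + (cmod (F k))\<^sup>2)) * F k * z powi k))"

definition nlft_one :: nlpair where
  "nlft_one = ((\<lambda>z. 1), (\<lambda>z. 0))"

text \<open>Ordered product over the (finite) support, indices increasing left to right
  (factors with F_k = 0 are the identity, so this is the product over all k).\<close>
definition nlft :: "(int \<Rightarrow> complex) \<Rightarrow> nlpair" where
  "nlft F = foldl (\<lambda>acc k. pmult acc (nlft_factor F k)) nlft_one
              (sorted_list_of_set (supp F))"

definition circ :: "real \<Rightarrow> complex" where
  "circ \<theta> = cis (2 * pi * \<theta>)"

definition L2T_norm :: "(complex \<Rightarrow> complex) \<Rightarrow> real" where
  "L2T_norm f = sqrt (set_lebesgue_integral lborel {0..1} (\<lambda>\<theta>. (cmod (f (circ \<theta>)))\<^sup>2))"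

definition intT :: "(complex \<Rightarrow> complex) \<Rightarrow> complex" where
  "intT f = set_lebesgue_integral lborel {0..1} (\<lambda>\<theta>. f (circ \<theta>))"

text \<open>a(\<infinity>) = \<integral>_T a, a positive real number for elements of L.\<close>
definition at_inf :: "(complex \<Rightarrow> complex) \<Rightarrow> complex" where
  "at_inf a = intT a"

definition rho :: "nlpair \<Rightarrow> nlpair \<Rightarrow> real" where
  "rho p q = (case p of (a, b) \<Rightarrow> case q of (c, d) \<Rightarrow>
      L2T_norm (\<lambda>z. a z - c z) + L2T_norm (\<lambda>z. b z - d z)
      + \<bar>ln (Re (at_inf a)) - ln (Re (at_inf c))\<bar>)"

end

theory Submission
  imports Defs "HOL-Analysis.Kronecker_Approximation_Theorem"
begin


definition cT :: "(complex \<Rightarrow> complex) \<Rightarrow> bool" where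
  "cT f \<longleftrightarrow> continuous_on {0..1} (\<lambda>\<theta>. f (circ \<theta>))"

lemma circ_norm [simp]: "cmod (circ t) = 1"
  by (simp add: circ_def)

lemma circ_nz [simp]: "circ t \<noteq> 0"
  using circ_norm[of t] by (metis norm_zero zero_neq_one)

lemma cont_circ [continuous_intros]: "continuous_on S circ"
  unfolding circ_def by (intro continuous_intros)

lemma inv_cnj_T: "cmod z = 1 \<Longrightarrow> inverse (cnj z) = z"
proof -
  assume "cmod z = 1"
  then have "cnj z * z = 1" using complex_norm_square[of z] by (simp add: mult.commute)
  then show ?thesis by (rule inverse_unique)
qed

lemma star_T: "cmod z = 1 \<Longrightarrow> star f z = cnj (f z)"
  by (simp add: star_def inv_cnj_T)

lemma cnj_T: "cmod z = 1 \<Longrightarrow> cnj z = inverse z"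
  using inv_cnj_T[of z] by (metis complex_cnj_cnj complex_cnj_inverse)

lemma lint_eq_integral:
  fixes f :: "real \<Rightarrow> 'b::euclidean_space"
  assumes "continuous_on {0..1} f"
  shows "set_lebesgue_integral lborel {0..1} f = integral {0..1} f"
proof -
  have "set_integrable lborel {0..1} f"
    unfolding set_integrable_def using borel_integrable_compact[OF _ assms] by simp
  then show ?thesis by (rule set_borel_integral_eq_integral(2))
qed

lemma intT_eq: "cT f \<Longrightarrow> intT f = integral {0..1} (\<lambda>t. f (circ t))"
  unfolding intT_def cT_def by (rule lint_eq_integral)

lemma L2_eq: "cT f \<Longrightarrow> L2T_norm f = sqrt (integral {0..1} (\<lambda>t. (cmod (f (circ t)))\<^sup>2))"
  unfolding L2T_norm_def cT_def by (subst lint_eq_integral) (auto intro!: continuous_intros)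

lemma intT_cong: "(\<And>z. cmod z = 1 \<Longrightarrow> f z = g z) \<Longrightarrow> intT f = intT g"
  unfolding intT_def by simp

lemma L2_cong: "(\<And>z. cmod z = 1 \<Longrightarrow> cmod (f z) = cmod (g z)) \<Longrightarrow> L2T_norm f = L2T_norm g"
  unfolding L2T_norm_def by simp

lemma cT_cong: "(\<And>z. cmod z = 1 \<Longrightarrow> f z = g z) \<Longrightarrow> cT f \<longleftrightarrow> cT g"
  unfolding cT_def by simp

lemma cT_add: "cT f \<Longrightarrow> cT g \<Longrightarrow> cT (\<lambda>z. f z + g z)"
  unfolding cT_def by (intro continuous_intros)
lemma cT_diff: "cT f \<Longrightarrow> cT g \<Longrightarrow> cT (\<lambda>z. f z - g z)"
  unfolding cT_def by (intro continuous_intros)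
lemma cT_mult: "cT f \<Longrightarrow> cT g \<Longrightarrow> cT (\<lambda>z. f z * g z)"
  unfolding cT_def by (intro continuous_intros)
lemma cT_const: "cT (\<lambda>z. c)"
  unfolding cT_def by (intro continuous_intros)
lemma cT_uminus: "cT f \<Longrightarrow> cT (\<lambda>z. - f z)"
  unfolding cT_def by (intro continuous_intros)
lemma cT_cnj: "cT f \<Longrightarrow> cT (\<lambda>z. cnj (f z))"
  unfolding cT_def by (intro continuous_intros)
lemma cT_star: "cT f \<Longrightarrow> cT (star f)"
  using cT_cnj[of f] cT_cong[of "star f" "\<lambda>z. cnj (f z)"] star_T by blast
lemma cT_powi: "cT (\<lambda>z. z powi k)"
  unfolding cT_def by (intro continuous_intros) auto

lemma intT_add: "cT f \<Longrightarrow> cT g \<Longrightarrow> intT (\<lambda>z. f z + g z) = intT f + intT g"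
  apply (simp add: intT_eq cT_add)
  apply (rule integral_add)
  unfolding cT_def by (auto intro: integrable_continuous_interval)

lemma intT_scale: "cT f \<Longrightarrow> intT (\<lambda>z. c * f z) = c * intT f"
  by (simp add: intT_eq cT_mult cT_const)

lemma intT_const: "intT (\<lambda>z. c) = c"
  by (simp add: intT_eq cT_const)

lemma cT_sum: "finite S \<Longrightarrow> (\<And>i. i \<in> S \<Longrightarrow> cT (h i)) \<Longrightarrow> cT (\<lambda>z. \<Sum>i\<in>S. h i z)"
proof (induction S rule: finite_induct)
  case empty then show ?case using cT_const[of 0] by simp
next
  case (insert y G) then show ?case using cT_add[of "h y" "\<lambda>z. \<Sum>i\<in>G. h i z"] by simp
qed

lemma intT_sum: "finite S \<Longrightarrow> (\<And>i. i \<in> S \<Longrightarrow> cT (h i)) \<Longrightarrow> intT (\<lambda>z. \<Sum>i\<in>S. h i z) = (\<Sum>i\<in>S. intT (h i))"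
proof (induction S rule: finite_induct)
  case empty
  then show ?case using intT_const[of 0] by simp
next
  case (insert x S0)
  have c: "cT (\<lambda>z. \<Sum>i\<in>S0. h i z)"
    using insert by (intro cT_sum) auto
  have "intT (\<lambda>z. \<Sum>i\<in>insert x S0. h i z) = intT (\<lambda>z. h x z + (\<Sum>i\<in>S0. h i z))"
    using insert.hyps by simp
  also have "\<dots> = intT (h x) + intT (\<lambda>z. \<Sum>i\<in>S0. h i z)"
    using intT_add[OF _ c, of "h x"] insert.prems by simp
  also have "intT (\<lambda>z. \<Sum>i\<in>S0. h i z) = (\<Sum>i\<in>S0. intT (h i))"
    by (rule insert.IH) (use insert.prems in auto)
  also have "intT (h x) + (\<Sum>i\<in>S0. intT (h i)) = (\<Sum>i\<in>insert x S0. intT (h i))"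
    using insert.hyps by simp
  finally show ?case .
qed




lemma cs_aux:
  fixes A B C :: real
  assumes q: "\<And>t. 0 \<le> t\<^sup>2 * A - 2 * t * C + B" and A: "A \<ge> 0" and B: "B \<ge> 0"
  shows "C \<le> sqrt A * sqrt B"
proof (cases "A = 0")
  case True
  show ?thesis
  proof (rule ccontr)
    assume "\<not> ?thesis"
    then have C: "C > 0" using True by simp
    have "0 \<le> B - 2 * ((B + 1) / (2 * C)) * C" using q[of "(B+1)/(2*C)"] True by simp
    also have "\<dots> = -1" using C by (simp add: field_simps)
    finally show False by simp
  qed
next
  case False
  then have Ap: "A > 0" using A by simp
  have "0 \<le> (C/A)\<^sup>2 * A - 2 * (C/A) * C + B" by (rule q)
  also have "\<dots> = B - C\<^sup>2 / A" using Ap by (simp add: field_simps power2_eq_square)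
  finally have "C\<^sup>2 \<le> A * B" using Ap by (simp add: field_simps)
  then have "sqrt (C\<^sup>2) \<le> sqrt (A * B)" by (rule real_sqrt_le_mono)
  then show ?thesis by (simp add: real_sqrt_mult)
qed

lemma int01_le: "continuous_on {0..1} f \<Longrightarrow> continuous_on {0..1} g \<Longrightarrow> (\<And>t. t \<in> {0..1} \<Longrightarrow> f t \<le> g t)
   \<Longrightarrow> integral {0..1} f \<le> integral {0..(1::real)} (g :: real \<Rightarrow> real)"
  by (intro integral_le integrable_continuous_interval) auto

lemma int01_nonneg: "continuous_on {0..1} f \<Longrightarrow> (\<And>t. t \<in> {0..1} \<Longrightarrow> 0 \<le> f t)
   \<Longrightarrow> 0 \<le> integral {0..(1::real)} (f :: real \<Rightarrow> real)"
  by (intro integral_nonneg integrable_continuous_interval) auto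

lemma int01_add: "continuous_on {0..1} f \<Longrightarrow> continuous_on {0..1} g
   \<Longrightarrow> integral {0..(1::real)} (\<lambda>t. f t + g t) = integral {0..1} f + integral {0..1} (g :: real \<Rightarrow> real)"
  by (intro integral_add integrable_continuous_interval) auto

lemma CS01:
  fixes F G :: "real \<Rightarrow> real"
  assumes F: "continuous_on {0..1} F" and G: "continuous_on {0..1} G"
  shows "integral {0..1} (\<lambda>t. F t * G t) \<le> sqrt (integral {0..1} (\<lambda>t. (F t)\<^sup>2)) * sqrt (integral {0..1} (\<lambda>t. (G t)\<^sup>2))"
proof (rule cs_aux)
  fix s :: real
  have "0 \<le> integral {0..1} (\<lambda>t. (s * F t - G t)\<^sup>2)"
    by (rule int01_nonneg) (use F G in \<open>auto intro!: continuous_intros\<close>)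
  also have "(\<lambda>t. (s * F t - G t)\<^sup>2) = (\<lambda>t. s\<^sup>2 * (F t)\<^sup>2 + ((-2 * s) * (F t * G t) + (G t)\<^sup>2))"
    by (auto simp: power2_eq_square algebra_simps)
  also have "integral {0..1} \<dots> = s\<^sup>2 * integral {0..1} (\<lambda>t. (F t)\<^sup>2) + ((-2 * s) * integral {0..1} (\<lambda>t. F t * G t) + integral {0..1} (\<lambda>t. (G t)\<^sup>2))"
  proof -
    have c1: "continuous_on {0..1} (\<lambda>t. s\<^sup>2 * (F t)\<^sup>2)" using F by (intro continuous_intros)
    have c2: "continuous_on {0..1} (\<lambda>t. (-2 * s) * (F t * G t))" using F G by (intro continuous_intros)
    have c3: "continuous_on {0..1} (\<lambda>t. (G t)\<^sup>2)" using G by (intro continuous_intros)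
    have c23: "continuous_on {0..1} (\<lambda>t. (-2 * s) * (F t * G t) + (G t)\<^sup>2)" using F G by (intro continuous_intros)
    have "integral {0..1} (\<lambda>t. s\<^sup>2 * (F t)\<^sup>2 + ((-2 * s) * (F t * G t) + (G t)\<^sup>2))
       = integral {0..1} (\<lambda>t. s\<^sup>2 * (F t)\<^sup>2) + integral {0..1} (\<lambda>t. (-2 * s) * (F t * G t) + (G t)\<^sup>2)"
      by (rule int01_add[OF c1 c23])
    also have "integral {0..1} (\<lambda>t. (-2 * s) * (F t * G t) + (G t)\<^sup>2) = integral {0..1} (\<lambda>t. (-2 * s) * (F t * G t)) + integral {0..1} (\<lambda>t. (G t)\<^sup>2)"
      by (rule int01_add[OF c2 c3])
    also have "integral {0..1} (\<lambda>t. s\<^sup>2 * (F t)\<^sup>2) = s\<^sup>2 * integral {0..1} (\<lambda>t. (F t)\<^sup>2)"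
      by (rule integral_mult_right)
    also have "integral {0..1} (\<lambda>t. (-2 * s) * (F t * G t)) = (-2 * s) * integral {0..1} (\<lambda>t. F t * G t)"
      by (rule integral_mult_right)
    finally show ?thesis .
  qed
  finally show "0 \<le> s\<^sup>2 * integral {0..1} (\<lambda>t. (F t)\<^sup>2) - 2 * s * integral {0..1} (\<lambda>t. F t * G t) + integral {0..1} (\<lambda>t. (G t)\<^sup>2)"
    by simp
qed (use F G in \<open>auto intro!: int01_nonneg continuous_intros\<close>)

lemma L2_tri:
  assumes f: "cT f" and g: "cT g"
  shows "L2T_norm (\<lambda>z. f z + g z) \<le> L2T_norm f + L2T_norm g"
proof -
  define F where "F t = cmod (f (circ t))" for t
  define G where "G t = cmod (g (circ t))" for t
  have cF: "continuous_on {0..1} F" using f unfolding F_def cT_def by (intro continuous_intros)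
  have cG: "continuous_on {0..1} G" using g unfolding G_def cT_def by (intro continuous_intros)
  have cfg: "continuous_on {0..1} (\<lambda>t. (cmod (f (circ t) + g (circ t)))\<^sup>2)"
    using f g unfolding cT_def by (intro continuous_intros)
  define A where "A = integral {0..1} (\<lambda>t. (F t)\<^sup>2)"
  define B where "B = integral {0..1} (\<lambda>t. (G t)\<^sup>2)"
  define C where "C = integral {0..1} (\<lambda>t. F t * G t)"
  have A0: "A \<ge> 0" unfolding A_def by (rule int01_nonneg) (use cF in \<open>auto intro!: continuous_intros\<close>)
  have B0: "B \<ge> 0" unfolding B_def by (rule int01_nonneg) (use cG in \<open>auto intro!: continuous_intros\<close>)
  have "integral {0..1} (\<lambda>t. (cmod (f (circ t) + g (circ t)))\<^sup>2) \<le> integral {0..1} (\<lambda>t. (F t)\<^sup>2 + (2 * (F t * G t) + (G t)\<^sup>2))"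
  proof (rule int01_le[OF cfg])
    show "continuous_on {0..1} (\<lambda>t. (F t)\<^sup>2 + (2 * (F t * G t) + (G t)\<^sup>2))"
      using cF cG by (intro continuous_intros)
    fix t :: real
    have "cmod (f (circ t) + g (circ t)) \<le> F t + G t" unfolding F_def G_def by (rule norm_triangle_ineq)
    then have "(cmod (f (circ t) + g (circ t)))\<^sup>2 \<le> (F t + G t)\<^sup>2"
      by (rule power_mono) simp
    then show "(cmod (f (circ t) + g (circ t)))\<^sup>2 \<le> (F t)\<^sup>2 + (2 * (F t * G t) + (G t)\<^sup>2)"
      by (simp add: power2_sum)
  qed
  also have "\<dots> = A + (2 * C + B)"
  proof -
    have c1: "continuous_on {0..1} (\<lambda>t. (F t)\<^sup>2)" using cF by (intro continuous_intros)
    have c2: "continuous_on {0..1} (\<lambda>t. 2 * (F t * G t))" using cF cG by (intro continuous_intros)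
    have c3: "continuous_on {0..1} (\<lambda>t. (G t)\<^sup>2)" using cG by (intro continuous_intros)
    have c23: "continuous_on {0..1} (\<lambda>t. 2 * (F t * G t) + (G t)\<^sup>2)" using cF cG by (intro continuous_intros)
    have "integral {0..1} (\<lambda>t. (F t)\<^sup>2 + (2 * (F t * G t) + (G t)\<^sup>2))
        = A + integral {0..1} (\<lambda>t. 2 * (F t * G t) + (G t)\<^sup>2)"
      unfolding A_def by (rule int01_add[OF c1 c23])
    also have "integral {0..1} (\<lambda>t. 2 * (F t * G t) + (G t)\<^sup>2) = integral {0..1} (\<lambda>t. 2 * (F t * G t)) + B"
      unfolding B_def by (rule int01_add[OF c2 c3])
    also have "integral {0..1} (\<lambda>t. 2 * (F t * G t)) = 2 * C"
      unfolding C_def by (rule integral_mult_right)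
    finally show ?thesis .
  qed
  also have "\<dots> \<le> A + (2 * (sqrt A * sqrt B) + B)"
    using CS01[OF cF cG] unfolding A_def B_def C_def by linarith
  also have "\<dots> = (sqrt A + sqrt B)\<^sup>2" using A0 B0 by (simp add: power2_sum)
  finally have I: "integral {0..1} (\<lambda>t. (cmod (f (circ t) + g (circ t)))\<^sup>2) \<le> (sqrt A + sqrt B)\<^sup>2" .
  have "sqrt (integral {0..1} (\<lambda>t. (cmod (f (circ t) + g (circ t)))\<^sup>2)) \<le> sqrt ((sqrt A + sqrt B)\<^sup>2)"
    using I by (rule real_sqrt_le_mono)
  also have "\<dots> = sqrt A + sqrt B" using A0 B0 by simp
  finally have J: "sqrt (integral {0..1} (\<lambda>t. (cmod (f (circ t) + g (circ t)))\<^sup>2)) \<le> sqrt A + sqrt B" .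
  have "L2T_norm (\<lambda>z. f z + g z) = sqrt (integral {0..1} (\<lambda>t. (cmod (f (circ t) + g (circ t)))\<^sup>2))"
    by (rule L2_eq[OF cT_add[OF f g]])
  moreover have "L2T_norm f = sqrt A" unfolding A_def F_def by (rule L2_eq[OF f])
  moreover have "L2T_norm g = sqrt B" unfolding B_def G_def by (rule L2_eq[OF g])
  ultimately show ?thesis using J by simp
qed

lemma L2_le:
  assumes f: "cT f" and h: "cT h" and le: "\<And>z. cmod z = 1 \<Longrightarrow> cmod (h z) \<le> cmod (f z)"
  shows "L2T_norm h \<le> L2T_norm f"
proof -
  have "integral {0..1} (\<lambda>t. (cmod (h (circ t)))\<^sup>2) \<le> integral {0..1} (\<lambda>t. (cmod (f (circ t)))\<^sup>2)"
    by (rule int01_le) (use f h le in \<open>auto simp: cT_def intro!: continuous_intros power_mono\<close>)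
  then show ?thesis using f h by (simp add: L2_eq)
qed

lemma L2_four:
  assumes cX: "cT X" and c1: "cT fu" and c2: "cT fv" and c3: "cT fw" and c4: "cT fy"
    and d1: "cT g1" and d2: "cT g2" and d3: "cT g3" and d4: "cT g4"
    and X: "\<And>z. cmod z = 1 \<Longrightarrow> X z = fu z + fv z + fw z + fy z"
    and l1: "\<And>z. cmod z = 1 \<Longrightarrow> cmod (fu z) \<le> cmod (g1 z)"
    and l2: "\<And>z. cmod z = 1 \<Longrightarrow> cmod (fv z) \<le> cmod (g2 z)"
    and l3: "\<And>z. cmod z = 1 \<Longrightarrow> cmod (fw z) \<le> cmod (g3 z)"
    and l4: "\<And>z. cmod z = 1 \<Longrightarrow> cmod (fy z) \<le> cmod (g4 z)"
  shows "L2T_norm X \<le> L2T_norm g1 + L2T_norm g2 + L2T_norm g3 + L2T_norm g4"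
proof -
  have e: "L2T_norm X = L2T_norm (\<lambda>z. fu z + fv z + fw z + fy z)"
    by (rule L2_cong) (simp add: X)
  have c12: "cT (\<lambda>z. fu z + fv z)" by (rule cT_add[OF c1 c2])
  have c123: "cT (\<lambda>z. fu z + fv z + fw z)" by (rule cT_add[OF c12 c3])
  have t1: "L2T_norm (\<lambda>z. fu z + fv z + fw z + fy z) \<le> L2T_norm (\<lambda>z. fu z + fv z + fw z) + L2T_norm fy"
    by (rule L2_tri[OF c123 c4])
  have t2: "L2T_norm (\<lambda>z. fu z + fv z + fw z) \<le> L2T_norm (\<lambda>z. fu z + fv z) + L2T_norm fw"
    by (rule L2_tri[OF c12 c3])
  have t3: "L2T_norm (\<lambda>z. fu z + fv z) \<le> L2T_norm fu + L2T_norm fv"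
    by (rule L2_tri[OF c1 c2])
  have "L2T_norm fu \<le> L2T_norm g1" by (rule L2_le[OF d1 c1 l1])
  moreover have "L2T_norm fv \<le> L2T_norm g2" by (rule L2_le[OF d2 c2 l2])
  moreover have "L2T_norm fw \<le> L2T_norm g3" by (rule L2_le[OF d3 c3 l3])
  moreover have "L2T_norm fy \<le> L2T_norm g4" by (rule L2_le[OF d4 c4 l4])
  ultimately show ?thesis using e t1 t2 t3 by linarith
qed




definition rep :: "(complex \<Rightarrow> complex) \<Rightarrow> int \<Rightarrow> int \<Rightarrow> (int \<Rightarrow> complex) \<Rightarrow> bool" where
  "rep f lo hi c \<longleftrightarrow> (\<forall>z. cmod z = 1 \<longrightarrow> f z = (\<Sum>j\<in>{lo..hi}. c j * z powi j))"

definition freq :: "(complex \<Rightarrow> complex) \<Rightarrow> int \<Rightarrow> int \<Rightarrow> bool" where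
  "freq f lo hi \<longleftrightarrow> (\<exists>c. rep f lo hi c)"

lemma nz_T: "cmod z = 1 \<Longrightarrow> z \<noteq> 0" by auto

lemma freq_cT: "freq f lo hi \<Longrightarrow> cT f"
proof -
  assume "freq f lo hi"
  then obtain c where c: "rep f lo hi c" unfolding freq_def by blast
  have "cT (\<lambda>z. \<Sum>j\<in>{lo..hi}. c j * z powi j)"
    by (intro cT_sum cT_mult cT_const cT_powi) auto
  then show ?thesis using c unfolding rep_def by (subst cT_cong) auto
qed

lemma intT_powi: "intT (\<lambda>z. z powi j) = (if j = 0 then 1 else 0)"
proof -
  have e: "circ t powi j = exp ((2 * pi * of_int j * \<i>) * complex_of_real t)" for t
    unfolding circ_def cis_conv_exp exp_power_int by (simp add: algebra_simps)
  have "intT (\<lambda>z. z powi j) = integral {0..1} (\<lambda>t. exp ((2 * pi * of_int j * \<i>) * complex_of_real t))"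
    using intT_eq[OF cT_powi[of j]] e by simp
  also have "\<dots> = (if j = 0 then 1 else 0)"
  proof (cases "j = 0")
    case True then show ?thesis by simp
  next
    case False
    then have "2 * pi * of_int j * \<i> \<noteq> 0" by simp
    then have "integral {0..1} (\<lambda>t. exp ((2 * pi * of_int j * \<i>) * complex_of_real t))
       = (exp ((2 * pi * of_int j * \<i>) * of_real 1) - 1) / (2 * pi * of_int j * \<i>)"
      by (intro integral_exp) auto
    also have "exp ((2 * pi * of_int j * \<i>) * of_real 1) = 1"
      using exp_integer_2pi[of "of_int j"] by (simp add: algebra_simps)
    finally show ?thesis using False by simp
  qed
  finally show ?thesis .
qed

lemma intT_rep: "rep f lo hi c \<Longrightarrow> intT f = (if lo \<le> 0 \<and> 0 \<le> hi then c 0 else 0)"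
proof -
  assume r: "rep f lo hi c"
  have "intT f = intT (\<lambda>z. \<Sum>j\<in>{lo..hi}. c j * z powi j)"
    using r unfolding rep_def by (intro intT_cong) auto
  also have "\<dots> = (\<Sum>j\<in>{lo..hi}. intT (\<lambda>z. c j * z powi j))"
    by (intro intT_sum cT_mult cT_const cT_powi) auto
  also have "\<dots> = (\<Sum>j\<in>{lo..hi}. (if j = 0 then c j else 0))"
    by (intro sum.cong refl) (simp add: intT_scale[OF cT_powi] intT_powi)
  also have "\<dots> = (if lo \<le> 0 \<and> 0 \<le> hi then c 0 else 0)"
    by (simp add: sum.delta)
  finally show ?thesis .
qed

lemma intT_neg: "freq f lo hi \<Longrightarrow> hi < 0 \<Longrightarrow> intT f = 0"
  unfolding freq_def using intT_rep by fastforce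

lemma freq_cong: "freq f lo hi \<Longrightarrow> (\<And>z. cmod z = 1 \<Longrightarrow> g z = f z) \<Longrightarrow> freq g lo hi"
  unfolding freq_def rep_def by auto

lemma freq_mono: "freq f lo hi \<Longrightarrow> lo' \<le> lo \<Longrightarrow> hi \<le> hi' \<Longrightarrow> freq f lo' hi'"
proof -
  assume f: "freq f lo hi" and l: "lo' \<le> lo" and h: "hi \<le> hi'"
  then obtain c where c: "rep f lo hi c" unfolding freq_def by blast
  have "rep f lo' hi' (\<lambda>j. if j \<in> {lo..hi} then c j else 0)"
    unfolding rep_def
  proof (intro allI impI)
    fix z :: complex assume z: "cmod z = 1"
    have "(\<Sum>j\<in>{lo'..hi'}. (if j \<in> {lo..hi} then c j else 0) * z powi j)
        = (\<Sum>j\<in>{lo'..hi'}. (if j \<in> {lo..hi} then c j * z powi j else 0))"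
      by (intro sum.cong) auto
    also have "\<dots> = (\<Sum>j\<in>{lo'..hi'} \<inter> {lo..hi}. c j * z powi j)"
      by (rule sum.inter_restrict[symmetric]) simp
    also have "{lo'..hi'} \<inter> {lo..hi} = {lo..hi}" using l h by auto
    finally show "f z = (\<Sum>j\<in>{lo'..hi'}. (if j \<in> {lo..hi} then c j else 0) * z powi j)"
      using c z unfolding rep_def by simp
  qed
  then show ?thesis unfolding freq_def by blast
qed

lemma freq_zero: "freq (\<lambda>z. 0) lo hi"
  unfolding freq_def rep_def by (rule exI[of _ "\<lambda>j. 0"]) simp

lemma freq_const: "freq (\<lambda>z. a) 0 0"
  unfolding freq_def rep_def by (rule exI[of _ "\<lambda>j. a"]) simp

lemma freq_add: "freq f lo hi \<Longrightarrow> freq g lo hi \<Longrightarrow> freq (\<lambda>z. f z + g z) lo hi"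
proof -
  assume "freq f lo hi" "freq g lo hi"
  then obtain c d where c: "rep f lo hi c" and d: "rep g lo hi d" unfolding freq_def by blast
  have "rep (\<lambda>z. f z + g z) lo hi (\<lambda>j. c j + d j)"
    using c d unfolding rep_def by (simp add: sum.distrib distrib_right)
  then show ?thesis unfolding freq_def by blast
qed

lemma freq_scale: "freq f lo hi \<Longrightarrow> freq (\<lambda>z. a * f z) lo hi"
proof -
  assume "freq f lo hi"
  then obtain c where c: "rep f lo hi c" unfolding freq_def by blast
  have "rep (\<lambda>z. a * f z) lo hi (\<lambda>j. a * c j)"
    using c unfolding rep_def by (simp add: sum_distrib_left mult.assoc)
  then show ?thesis unfolding freq_def by blast
qed

lemma freq_uminus: "freq f lo hi \<Longrightarrow> freq (\<lambda>z. - f z) lo hi"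
  using freq_scale[of f lo hi "-1"] by simp

lemma freq_diff: "freq f lo hi \<Longrightarrow> freq g lo hi \<Longrightarrow> freq (\<lambda>z. f z - g z) lo hi"
  using freq_add[of f lo hi "\<lambda>z. - g z"] freq_uminus[of g lo hi] by simp

lemma freq_sum: "finite S \<Longrightarrow> (\<And>i. i \<in> S \<Longrightarrow> freq (h i) lo hi) \<Longrightarrow> freq (\<lambda>z. \<Sum>i\<in>S. h i z) lo hi"
proof (induction S rule: finite_induct)
  case empty then show ?case using freq_zero by simp
next
  case (insert y G) then show ?case using freq_add[of "h y" lo hi "\<lambda>z. \<Sum>i\<in>G. h i z"] by simp
qed

lemma freq_shift: "freq f lo hi \<Longrightarrow> freq (\<lambda>z. z powi k * f z) (lo + k) (hi + k)"
proof -
  assume "freq f lo hi"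
  then obtain c where c: "rep f lo hi c" unfolding freq_def by blast
  have "rep (\<lambda>z. z powi k * f z) (lo + k) (hi + k) (\<lambda>j. c (j - k))"
    unfolding rep_def
  proof (intro allI impI)
    fix z :: complex assume z: "cmod z = 1"
    have "(\<Sum>j\<in>{lo + k..hi + k}. c (j - k) * z powi j) = (\<Sum>i\<in>{lo..hi}. c i * z powi (i + k))"
      by (rule sum.reindex_bij_witness[of _ "\<lambda>i. i + k" "\<lambda>j. j - k"]) auto
    also have "\<dots> = (\<Sum>i\<in>{lo..hi}. z powi k * (c i * z powi i))"
    proof (intro sum.cong refl)
      fix i assume "i \<in> {lo..hi}"
      have "z powi (i + k) = z powi i * z powi k" by (rule power_int_add) (use z in auto)
      then show "c i * z powi (i + k) = z powi k * (c i * z powi i)" by simp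
    qed
    also have "\<dots> = z powi k * f z" using c z unfolding rep_def by (simp add: sum_distrib_left)
    finally show "z powi k * f z = (\<Sum>j\<in>{lo + k..hi + k}. c (j - k) * z powi j)" by simp
  qed
  then show ?thesis unfolding freq_def by blast
qed

lemma cnj_powi_T: "cmod z = 1 \<Longrightarrow> cnj (z powi j) = z powi (- j)"
proof -
  assume z: "cmod z = 1"
  have "cnj (z powi j) = (inverse z) powi j" using z by (simp add: cnj_T)
  also have "\<dots> = z powi (- j)" by (simp add: power_int_minus power_int_inverse)
  finally show ?thesis .
qed

lemma freq_cnj: "freq f lo hi \<Longrightarrow> freq (\<lambda>z. cnj (f z)) (- hi) (- lo)"
proof -
  assume "freq f lo hi"
  then obtain c where c: "rep f lo hi c" unfolding freq_def by blast
  have "rep (\<lambda>z. cnj (f z)) (- hi) (- lo) (\<lambda>j. cnj (c (- j)))"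
    unfolding rep_def
  proof (intro allI impI)
    fix z :: complex assume z: "cmod z = 1"
    have "(\<Sum>j\<in>{- hi..- lo}. cnj (c (- j)) * z powi j) = (\<Sum>i\<in>{lo..hi}. cnj (c i) * z powi (- i))"
      by (rule sum.reindex_bij_witness[of _ "\<lambda>i. - i" "\<lambda>j. - j"]) auto
    also have "\<dots> = (\<Sum>i\<in>{lo..hi}. cnj (c i * z powi i))"
      by (intro sum.cong refl) (simp only: complex_cnj_mult cnj_powi_T[OF z])
    also have "\<dots> = cnj (f z)" using c z unfolding rep_def by simp
    finally show "cnj (f z) = (\<Sum>j\<in>{- hi..- lo}. cnj (c (- j)) * z powi j)" by simp
  qed
  then show ?thesis unfolding freq_def by blast
qed

lemma freq_star: "freq f lo hi \<Longrightarrow> freq (star f) (- hi) (- lo)"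
  using freq_cnj freq_cong star_T by metis

lemma freq_mult: "freq f l1 h1 \<Longrightarrow> freq g l2 h2 \<Longrightarrow> freq (\<lambda>z. f z * g z) (l1 + l2) (h1 + h2)"
proof -
  assume f: "freq f l1 h1" and g: "freq g l2 h2"
  then obtain c where c: "rep f l1 h1 c" unfolding freq_def by blast
  have "freq (\<lambda>z. \<Sum>i\<in>{l1..h1}. c i * (z powi i * g z)) (l1 + l2) (h1 + h2)"
  proof (rule freq_sum)
    fix i assume i: "i \<in> {l1..h1}"
    have "freq (\<lambda>z. z powi i * g z) (l2 + i) (h2 + i)" by (rule freq_shift[OF g])
    then have "freq (\<lambda>z. z powi i * g z) (l1 + l2) (h1 + h2)"
      by (rule freq_mono) (use i in auto)
    then show "freq (\<lambda>z. c i * (z powi i * g z)) (l1 + l2) (h1 + h2)" by (rule freq_scale)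
  qed simp
  then show ?thesis
  proof (rule freq_cong)
    fix z :: complex assume z: "cmod z = 1"
    have "f z * g z = (\<Sum>i\<in>{l1..h1}. c i * z powi i) * g z" using c z unfolding rep_def by simp
    also have "\<dots> = (\<Sum>i\<in>{l1..h1}. c i * z powi i * g z)" by (rule sum_distrib_right)
    finally show "f z * g z = (\<Sum>i\<in>{l1..h1}. c i * (z powi i * g z))" by (simp add: mult.assoc)
  qed
qed

lemma freq_decomp:
  assumes "freq f lo 0"
  shows "\<exists>f1. freq f1 lo (-1) \<and> (\<forall>z. cmod z = 1 \<longrightarrow> f z = intT f + f1 z)"
proof -
  obtain c where c: "rep f lo 0 c" using assms unfolding freq_def by blast
  show ?thesis
  proof (cases "lo \<le> 0")
    case True
    have "{lo..0} = insert 0 {lo..-1}" using True by auto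
    then have "\<forall>z. cmod z = 1 \<longrightarrow> f z = c 0 + (\<Sum>j\<in>{lo..-1}. c j * z powi j)"
      using c unfolding rep_def by simp
    moreover have "intT f = c 0" using intT_rep[OF c] True by simp
    moreover have "freq (\<lambda>z. \<Sum>j\<in>{lo..-1}. c j * z powi j) lo (-1)"
      unfolding freq_def rep_def by blast
    ultimately show ?thesis by (intro exI[of _ "\<lambda>z. \<Sum>j\<in>{lo..-1}. c j * z powi j"]) auto
  next
    case False
    then have "\<forall>z. cmod z = 1 \<longrightarrow> f z = 0" using c unfolding rep_def by simp
    moreover have "intT f = 0" using intT_rep[OF c] False by simp
    ultimately show ?thesis using freq_zero[of lo "-1"] by (intro exI[of _ "\<lambda>z. 0"]) auto
  qed
qed

lemma intT_prod:
  assumes f: "freq f l1 0" and g: "freq g l2 0"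
  shows "intT (\<lambda>z. f z * g z) = intT f * intT g"
proof -
  obtain f1 where f1: "freq f1 l1 (-1)" and ef: "\<And>z. cmod z = 1 \<Longrightarrow> f z = intT f + f1 z"
    using freq_decomp[OF f] by blast
  obtain g1 where g1: "freq g1 l2 (-1)" and eg: "\<And>z. cmod z = 1 \<Longrightarrow> g z = intT g + g1 z"
    using freq_decomp[OF g] by blast
  define L where "L = min (l1 + l2) (min l1 l2)"
  define h where "h z = intT f * g1 z + intT g * f1 z + f1 z * g1 z" for z
  have h1: "freq (\<lambda>z. intT f * g1 z) L (-1)"
    by (rule freq_mono[OF freq_scale[OF g1]]) (auto simp: L_def)
  have h2: "freq (\<lambda>z. intT g * f1 z) L (-1)"
    by (rule freq_mono[OF freq_scale[OF f1]]) (auto simp: L_def)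
  have h3: "freq (\<lambda>z. f1 z * g1 z) L (-1)"
    by (rule freq_mono[OF freq_mult[OF f1 g1]]) (auto simp: L_def)
  have h: "freq h L (-1)" unfolding h_def
    by (intro freq_add h1 h2 h3)
  have "intT (\<lambda>z. f z * g z) = intT (\<lambda>z. intT f * intT g + h z)"
  proof (rule intT_cong)
    fix z :: complex assume z: "cmod z = 1"
    have "f z * g z = (intT f + f1 z) * (intT g + g1 z)" using ef[OF z] eg[OF z] by simp
    also have "\<dots> = intT f * intT g + h z" unfolding h_def by (simp add: algebra_simps)
    finally show "f z * g z = intT f * intT g + h z" .
  qed
  also have "\<dots> = intT f * intT g + intT h"
    using intT_add[OF cT_const freq_cT[OF h]] intT_const by simp
  also have "intT h = 0" by (rule intT_neg[OF h]) simp
  finally show ?thesis by simp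
qed




lemma quat_id:
  fixes a b c d :: complex
  shows "(cmod (a*c - b*cnj d))\<^sup>2 + (cmod (a*d + b*cnj c))\<^sup>2 = ((cmod a)\<^sup>2 + (cmod b)\<^sup>2) * ((cmod c)\<^sup>2 + (cmod d)\<^sup>2)"
proof -
  have "complex_of_real ((cmod (a*c - b*cnj d))\<^sup>2 + (cmod (a*d + b*cnj c))\<^sup>2)
      = complex_of_real (((cmod a)\<^sup>2 + (cmod b)\<^sup>2) * ((cmod c)\<^sup>2 + (cmod d)\<^sup>2))"
    apply (simp only: of_real_add of_real_mult complex_norm_square complex_cnj_diff complex_cnj_mult complex_cnj_add complex_cnj_cnj)
    apply (simp add: algebra_simps)
    done
  then show ?thesis by (simp only: of_real_eq_iff)
qed

lemma intT_diff: "cT f \<Longrightarrow> cT g \<Longrightarrow> intT (\<lambda>z. f z - g z) = intT f - intT g"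
proof -
  assume f: "cT f" and g: "cT g"
  have "intT (\<lambda>z. f z - g z) = intT (\<lambda>z. f z + (-1) * g z)" by simp
  also have "\<dots> = intT f + intT (\<lambda>z. (-1) * g z)"
    by (rule intT_add[OF f cT_mult[OF cT_const g]])
  also have "intT (\<lambda>z. (-1) * g z) = - intT g" using intT_scale[OF g, of "-1"] by simp
  finally show ?thesis by simp
qed

definition nstep :: "(int \<Rightarrow> complex) \<Rightarrow> nlpair \<Rightarrow> int \<Rightarrow> nlpair" where
  "nstep F acc k = pmult acc (nlft_factor F k)"

lemma nlft_inv:
  "sorted_wrt (<) ks \<Longrightarrow> (\<forall>k\<in>set ks. t \<le> k \<and> k < u) \<Longrightarrow> t \<le> u \<Longrightarrow>
    freq (fst (foldl (nstep F) nlft_one ks)) (t - u) 0 \<and>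
    freq (snd (foldl (nstep F) nlft_one ks)) t (u - 1) \<and>
    (\<exists>x>0. intT (fst (foldl (nstep F) nlft_one ks)) = complex_of_real x) \<and>
    (\<forall>z. cmod z = 1 \<longrightarrow> (cmod (fst (foldl (nstep F) nlft_one ks) z))\<^sup>2 + (cmod (snd (foldl (nstep F) nlft_one ks) z))\<^sup>2 = 1)"
proof (induction ks arbitrary: u rule: rev_induct)
  case Nil
  have "freq (\<lambda>z. 1) (t - u) 0" by (rule freq_mono[OF freq_const]) (use Nil in auto)
  moreover have "intT (\<lambda>z. 1) = complex_of_real 1" using intT_const by simp
  ultimately show ?case by (auto simp: nlft_one_def freq_zero)
next
  case (snoc k xs)
  have sx: "sorted_wrt (<) xs" and xk: "\<forall>x\<in>set xs. x < k" using snoc.prems(1) by (auto simp: sorted_wrt_append)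
  have tk: "t \<le> k" and ku: "k < u" using snoc.prems(2) by auto
  have IH: "freq (fst (foldl (nstep F) nlft_one xs)) (t - k) 0 \<and>
    freq (snd (foldl (nstep F) nlft_one xs)) t (k - 1) \<and>
    (\<exists>x>0. intT (fst (foldl (nstep F) nlft_one xs)) = complex_of_real x) \<and>
    (\<forall>z. cmod z = 1 \<longrightarrow> (cmod (fst (foldl (nstep F) nlft_one xs) z))\<^sup>2 + (cmod (snd (foldl (nstep F) nlft_one xs) z))\<^sup>2 = 1)"
    by (rule snoc.IH) (use sx xk snoc.prems(2) tk in auto)
  obtain a b where ab: "foldl (nstep F) nlft_one xs = (a, b)" by fastforce
  define r where "r = 1 / sqrt (1 + (cmod (F k))\<^sup>2)"
  have r0: "r > 0" unfolding r_def by (simp add: add_pos_nonneg)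
  have pos: "0 < 1 + (cmod (F k))\<^sup>2" by (rule add_pos_nonneg[OF zero_less_one zero_le_power2])
  have r2: "r\<^sup>2 * (1 + (cmod (F k))\<^sup>2) = 1" unfolding r_def
    using pos by (simp add: power_divide)
  define c where "c = (\<lambda>z::complex. complex_of_real r)"
  define d where "d = (\<lambda>z::complex. complex_of_real r * F k * z powi k)"
  have fac: "nlft_factor F k = (c, d)" unfolding nlft_factor_def c_def d_def r_def by simp
  have P: "foldl (nstep F) nlft_one (xs @ [k]) = ((\<lambda>z. a z * c z - b z * star d z), (\<lambda>z. a z * d z + b z * star c z))"
    using ab fac by (simp add: nstep_def pmult_def)
  have fa: "freq a (t - k) 0" and fb: "freq b t (k - 1)" and ia: "\<exists>x>0. intT a = complex_of_real x"
    and ua: "\<forall>z. cmod z = 1 \<longrightarrow> (cmod (a z))\<^sup>2 + (cmod (b z))\<^sup>2 = 1"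
    using IH ab by auto
  have fc: "freq c 0 0" unfolding c_def by (rule freq_const)
  have fd0: "freq (\<lambda>z. z powi k * (complex_of_real r * F k)) (0 + k) (0 + k)"
    by (rule freq_shift[OF freq_const])
  have fd1: "freq d (0 + k) (0 + k)" by (rule freq_cong[OF fd0]) (simp add: d_def mult.commute)
  then have fd: "freq d k k" by simp
  have fsd: "freq (star d) (- k) (- k)" using freq_star[OF fd] by simp
  have fsc: "freq (star c) 0 0" using freq_star[OF fc] by simp
  have fac1: "freq (\<lambda>z. a z * c z) (t - k + 0) (0 + 0)" by (rule freq_mult[OF fa fc])
  have fbd: "freq (\<lambda>z. b z * star d z) (t + - k) (k - 1 + - k)" by (rule freq_mult[OF fb fsd])
  have fA: "freq (\<lambda>z. a z * c z - b z * star d z) (t - u) 0"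
    by (intro freq_diff freq_mono[OF fac1] freq_mono[OF fbd]) (use ku in auto)
  have fad: "freq (\<lambda>z. a z * d z) (t - k + k) (0 + k)" by (rule freq_mult[OF fa fd])
  have fbc: "freq (\<lambda>z. b z * star c z) (t + 0) (k - 1 + 0)" by (rule freq_mult[OF fb fsc])
  have fB: "freq (\<lambda>z. a z * d z + b z * star c z) t (u - 1)"
    by (intro freq_add freq_mono[OF fad] freq_mono[OF fbc]) (use ku in auto)
  obtain x where x0: "x > 0" and ix: "intT a = complex_of_real x" using ia by blast
  have "intT (\<lambda>z. a z * c z - b z * star d z) = intT (\<lambda>z. a z * c z) - intT (\<lambda>z. b z * star d z)"
    by (rule intT_diff[OF freq_cT[OF fac1] freq_cT[OF fbd]])
  also have "intT (\<lambda>z. b z * star d z) = 0" by (rule intT_neg[OF fbd]) simp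
  also have "intT (\<lambda>z. a z * c z) = intT a * intT c" by (rule intT_prod[OF fa fc])
  also have "intT c = complex_of_real r" unfolding c_def by (rule intT_const)
  finally have iA: "intT (\<lambda>z. a z * c z - b z * star d z) = complex_of_real (x * r)" using ix by simp
  have uA: "(cmod (a z * c z - b z * star d z))\<^sup>2 + (cmod (a z * d z + b z * star c z))\<^sup>2 = 1"
    if z: "cmod z = 1" for z
  proof -
    have "(cmod (a z * c z - b z * star d z))\<^sup>2 + (cmod (a z * d z + b z * star c z))\<^sup>2
       = ((cmod (a z))\<^sup>2 + (cmod (b z))\<^sup>2) * ((cmod (c z))\<^sup>2 + (cmod (d z))\<^sup>2)"
      using quat_id[of "a z" "c z" "b z" "d z"] star_T[OF z] by simp
    also have "(cmod (c z))\<^sup>2 + (cmod (d z))\<^sup>2 = r\<^sup>2 * (1 + (cmod (F k))\<^sup>2)"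
      using z r0 unfolding c_def d_def by (simp add: norm_mult norm_power_int power_mult_distrib algebra_simps)
    finally show ?thesis using ua z r2 by simp
  qed
  have ex: "\<exists>y>0. intT (\<lambda>z. a z * c z - b z * star d z) = complex_of_real y"
    using iA x0 r0 by (intro exI[of _ "x * r"]) auto
  show ?case unfolding P fst_conv snd_conv using fA fB ex uA by blast
qed

lemma nlft_props:
  assumes fin: "finite (supp F)" and bd: "\<forall>k\<in>supp F. lo \<le> k \<and> k < hi" and lh: "lo \<le> hi"
  shows "freq (fst (nlft F)) (lo - hi) 0 \<and> freq (snd (nlft F)) lo (hi - 1) \<and>
    (\<exists>x>0. intT (fst (nlft F)) = complex_of_real x) \<and>
    (\<forall>z. cmod z = 1 \<longrightarrow> (cmod (fst (nlft F) z))\<^sup>2 + (cmod (snd (nlft F) z))\<^sup>2 = 1)"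
proof -
  have e: "nlft F = foldl (nstep F) nlft_one (sorted_list_of_set (supp F))"
    unfolding nlft_def nstep_def by (rule refl)
  show ?thesis unfolding e
    by (rule nlft_inv) (use fin bd lh in auto)
qed




lemma unit_le: "(cmod x)\<^sup>2 + (cmod y)\<^sup>2 = 1 \<Longrightarrow> cmod x \<le> 1 \<and> cmod y \<le> 1"
proof -
  assume h: "(cmod x)\<^sup>2 + (cmod y)\<^sup>2 = 1"
  have hx: "(cmod x)\<^sup>2 \<le> 1" using h zero_le_power2[of "cmod y"] by linarith
  have hy: "(cmod y)\<^sup>2 \<le> 1" using h zero_le_power2[of "cmod x"] by linarith
  have "cmod x \<le> 1" using power2_le_imp_le[of "cmod x" 1] hx by simp
  moreover have "cmod y \<le> 1" using power2_le_imp_le[of "cmod y" 1] hy by simp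
  ultimately show ?thesis by simp
qed

lemma mult_le1: "cmod y \<le> 1 \<Longrightarrow> cmod (x * y) \<le> cmod x"
  by (simp add: norm_mult mult_left_le)
lemma mult_le1': "cmod y \<le> 1 \<Longrightarrow> cmod (y * x) \<le> cmod x"
  by (simp add: norm_mult mult_left_le_one_le)

lemma split_point:
  fixes S1 S2 :: "int set"
  assumes "finite S1" "finite S2" "\<forall>j\<in>S1. \<forall>k\<in>S2. j < k"
  shows "\<exists>L t U. L \<le> t \<and> t \<le> U \<and> (\<forall>j\<in>S1. L \<le> j \<and> j < t) \<and> (\<forall>k\<in>S2. t \<le> k \<and> k < U)"
proof -
  define M where "M = (\<Sum>x\<in>S1 \<union> S2. \<bar>x\<bar>)"
  have M: "\<bar>x\<bar> \<le> M" if "x \<in> S1 \<union> S2" for x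
    unfolding M_def by (rule member_le_sum) (use assms that in auto)
  obtain t where t1: "\<forall>j\<in>S1. j < t" and t2: "\<forall>k\<in>S2. t \<le> k"
  proof (cases "S2 = {}")
    case True
    show ?thesis by (rule that[of "M + 1"]) (use M True in force)+
  next
    case False
    show ?thesis by (rule that[of "Min S2"]) (use assms False Min_in in auto)
  qed
  show ?thesis
    by (rule exI[of _ "min t (- M)"], rule exI[of _ t], rule exI[of _ "max t (M + 1)"])
       (use M t1 t2 in force)
qed

lemma final_arith:
  fixes P1 P2 A B C D lg lf lc :: real
  assumes "P1 \<le> A + C + B + D" "P2 \<le> A + D + B + C" "lg \<le> lf + lc" "0 \<le> lf" "0 \<le> lc"
  shows "P1 + P2 + lg \<le> 2 * (A + B + lf) + 2 * (C + D + lc)"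
proof -
  have "P1 + P2 + lg \<le> (A + C + B + D) + (A + D + B + C) + (lf + lc)" using assms by (intro add_mono) auto
  also have "\<dots> \<le> 2 * (A + B + lf) + 2 * (C + D + lc)" using assms by (simp add: algebra_simps)
  finally show ?thesis .
qed

theorem theorem6p1:
  fixes F Ft G Gt :: "int \<Rightarrow> complex"
  assumes "finite (supp F)" and "finite (supp Ft)" and "finite (supp G)" and "finite (supp Gt)"
    and "\<forall>j \<in> supp F \<union> supp Ft. \<forall>k \<in> supp G \<union> supp Gt. j < k"
  shows "rho (pmult (nlft F) (nlft G)) (pmult (nlft Ft) (nlft Gt))
           \<le> 2 * rho (nlft F) (nlft Ft) + 2 * rho (nlft G) (nlft Gt)"
proof -
  obtain L t U where Lt: "L \<le> t" and tU: "t \<le> U"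
    and b1: "\<forall>j\<in>supp F \<union> supp Ft. L \<le> j \<and> j < t" and b2: "\<forall>k\<in>supp G \<union> supp Gt. t \<le> k \<and> k < U"
    using split_point[of "supp F \<union> supp Ft" "supp G \<union> supp Gt"] assms by auto
  obtain a b where eF: "nlft F = (a, b)" by fastforce
  obtain a2 b2 where eFt: "nlft Ft = (a2, b2)" by fastforce
  obtain c d where eG: "nlft G = (c, d)" by fastforce
  obtain c2 d2 where eGt: "nlft Gt = (c2, d2)" by fastforce
  have pF: "freq a (L - t) 0 \<and> freq b L (t - 1) \<and> (\<exists>x>0. intT a = complex_of_real x) \<and>
    (\<forall>z. cmod z = 1 \<longrightarrow> (cmod (a z))\<^sup>2 + (cmod (b z))\<^sup>2 = 1)"
    using nlft_props[of F L t] assms(1) b1 Lt eF by auto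
  have pFt: "freq a2 (L - t) 0 \<and> freq b2 L (t - 1) \<and> (\<exists>x>0. intT a2 = complex_of_real x) \<and>
    (\<forall>z. cmod z = 1 \<longrightarrow> (cmod (a2 z))\<^sup>2 + (cmod (b2 z))\<^sup>2 = 1)"
    using nlft_props[of Ft L t] assms(2) b1 Lt eFt by auto
  have pG: "freq c (t - U) 0 \<and> freq d t (U - 1) \<and> (\<exists>x>0. intT c = complex_of_real x) \<and>
    (\<forall>z. cmod z = 1 \<longrightarrow> (cmod (c z))\<^sup>2 + (cmod (d z))\<^sup>2 = 1)"
    using nlft_props[of G t U] assms(3) b2 tU eG by auto
  have pGt: "freq c2 (t - U) 0 \<and> freq d2 t (U - 1) \<and> (\<exists>x>0. intT c2 = complex_of_real x) \<and>
    (\<forall>z. cmod z = 1 \<longrightarrow> (cmod (c2 z))\<^sup>2 + (cmod (d2 z))\<^sup>2 = 1)"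
    using nlft_props[of Gt t U] assms(4) b2 tU eGt by auto
  have fa: "freq a (L - t) 0" and fb: "freq b L (t - 1)" using pF by auto
  have fa2: "freq a2 (L - t) 0" and fb2: "freq b2 L (t - 1)" using pFt by auto
  have fc: "freq c (t - U) 0" and fd: "freq d t (U - 1)" using pG by auto
  have fc2: "freq c2 (t - U) 0" and fd2: "freq d2 t (U - 1)" using pGt by auto
  obtain xa where xa: "xa > 0" "intT a = complex_of_real xa" using pF by auto
  obtain xa2 where xa2: "xa2 > 0" "intT a2 = complex_of_real xa2" using pFt by auto
  obtain xc where xc: "xc > 0" "intT c = complex_of_real xc" using pG by auto
  obtain xc2 where xc2: "xc2 > 0" "intT c2 = complex_of_real xc2" using pGt by auto
  have ua: "cmod (a z) \<le> 1" "cmod (b z) \<le> 1" if "cmod z = 1" for z using pF unit_le that by blast+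
  have ua2: "cmod (a2 z) \<le> 1" "cmod (b2 z) \<le> 1" if "cmod z = 1" for z using pFt unit_le that by blast+
  have uc: "cmod (c z) \<le> 1" "cmod (d z) \<le> 1" if "cmod z = 1" for z using pG unit_le that by blast+
  have uc2: "cmod (c2 z) \<le> 1" "cmod (d2 z) \<le> 1" if "cmod z = 1" for z using pGt unit_le that by blast+
  have ca: "cT a" "cT b" "cT a2" "cT b2" "cT c" "cT d" "cT c2" "cT d2"
    using fa fb fa2 fb2 fc fd fc2 fd2 by (auto intro: freq_cT)
  note cTs = cT_add cT_diff cT_mult cT_uminus cT_cnj cT_star ca
  have intprod: "intT (\<lambda>z. p z * q z - r z * star s z) = complex_of_real (xp * xq)"
    if fp: "freq p (L - t) 0" and fr: "freq r L (t - 1)" and fq: "freq q (t - U) 0" and fs: "freq s t (U - 1)"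
      and ip: "intT p = complex_of_real xp" and iq: "intT q = complex_of_real xq" for p q r s xp xq
  proof -
    have f1: "freq (\<lambda>z. r z * star s z) (L + - (U - 1)) (t - 1 + - t)"
      by (rule freq_mult[OF fr freq_star[OF fs]])
    have "intT (\<lambda>z. p z * q z - r z * star s z) = intT (\<lambda>z. p z * q z) - intT (\<lambda>z. r z * star s z)"
      by (rule intT_diff) (use freq_cT[OF f1] freq_cT[OF fp] freq_cT[OF fq] in \<open>auto intro: cT_mult\<close>)
    also have "intT (\<lambda>z. r z * star s z) = 0" by (rule intT_neg[OF f1]) simp
    also have "intT (\<lambda>z. p z * q z) = intT p * intT q" by (rule intT_prod[OF fp fq])
    finally show ?thesis using ip iq by simp
  qed
  have i1: "at_inf (\<lambda>z. a z * c z - b z * star d z) = complex_of_real (xa * xc)"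
    unfolding at_inf_def by (rule intprod[OF fa fb fc fd xa(2) xc(2)])
  have i2: "at_inf (\<lambda>z. a2 z * c2 z - b2 z * star d2 z) = complex_of_real (xa2 * xc2)"
    unfolding at_inf_def by (rule intprod[OF fa2 fb2 fc2 fd2 xa2(2) xc2(2)])
  have logp: "\<bar>ln (Re (at_inf (\<lambda>z. a z * c z - b z * star d z))) - ln (Re (at_inf (\<lambda>z. a2 z * c2 z - b2 z * star d2 z)))\<bar>
      \<le> \<bar>ln (Re (at_inf a)) - ln (Re (at_inf a2))\<bar> + \<bar>ln (Re (at_inf c)) - ln (Re (at_inf c2))\<bar>"
    using xa xa2 xc xc2 unfolding i1 i2 by (simp add: at_inf_def ln_mult)
  have l1: "L2T_norm (\<lambda>z. (a z * c z - b z * star d z) - (a2 z * c2 z - b2 z * star d2 z))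
     \<le> L2T_norm (\<lambda>z. a z - a2 z) + L2T_norm (\<lambda>z. c z - c2 z) + L2T_norm (\<lambda>z. b z - b2 z) + L2T_norm (\<lambda>z. d z - d2 z)"
  proof (rule L2_four[where fu = "\<lambda>z. (a z - a2 z) * c z" and fv = "\<lambda>z. a2 z * (c z - c2 z)"
        and fw = "\<lambda>z. - (b z - b2 z) * cnj (d z)" and fy = "\<lambda>z. - b2 z * (cnj (d z) - cnj (d2 z))"])
    fix z :: complex assume z: "cmod z = 1"
    show "a z * c z - b z * star d z - (a2 z * c2 z - b2 z * star d2 z) =
      (a z - a2 z) * c z + a2 z * (c z - c2 z) + - (b z - b2 z) * cnj (d z) + - b2 z * (cnj (d z) - cnj (d2 z))"
      using z by (simp add: star_T algebra_simps)
    show "cmod ((a z - a2 z) * c z) \<le> cmod (a z - a2 z)" by (rule mult_le1[OF uc(1)[OF z]])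
    show "cmod (a2 z * (c z - c2 z)) \<le> cmod (c z - c2 z)" by (rule mult_le1'[OF ua2(1)[OF z]])
    show "cmod (- (b z - b2 z) * cnj (d z)) \<le> cmod (b z - b2 z)"
      using mult_le1[of "cnj (d z)" "- (b z - b2 z)"] uc(2)[OF z] by (simp add: norm_minus_commute)
    have "cmod (- b2 z * (cnj (d z) - cnj (d2 z))) \<le> cmod (cnj (d z) - cnj (d2 z))"
      using mult_le1'[of "- b2 z" "cnj (d z) - cnj (d2 z)"] ua2(2)[OF z] by simp
    also have "cmod (cnj (d z) - cnj (d2 z)) = cmod (d z - d2 z)"
      by (metis complex_cnj_diff complex_mod_cnj)
    finally show "cmod (- b2 z * (cnj (d z) - cnj (d2 z))) \<le> cmod (d z - d2 z)" .
  qed (intro cTs; fail)+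
  have l2: "L2T_norm (\<lambda>z. (a z * d z + b z * star c z) - (a2 z * d2 z + b2 z * star c2 z))
     \<le> L2T_norm (\<lambda>z. a z - a2 z) + L2T_norm (\<lambda>z. d z - d2 z) + L2T_norm (\<lambda>z. b z - b2 z) + L2T_norm (\<lambda>z. c z - c2 z)"
  proof (rule L2_four[where fu = "\<lambda>z. (a z - a2 z) * d z" and fv = "\<lambda>z. a2 z * (d z - d2 z)"
        and fw = "\<lambda>z. (b z - b2 z) * cnj (c z)" and fy = "\<lambda>z. b2 z * (cnj (c z) - cnj (c2 z))"])
    fix z :: complex assume z: "cmod z = 1"
    show "a z * d z + b z * star c z - (a2 z * d2 z + b2 z * star c2 z) =
      (a z - a2 z) * d z + a2 z * (d z - d2 z) + (b z - b2 z) * cnj (c z) + b2 z * (cnj (c z) - cnj (c2 z))"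
      using z by (simp add: star_T algebra_simps)
    show "cmod ((a z - a2 z) * d z) \<le> cmod (a z - a2 z)" by (rule mult_le1[OF uc(2)[OF z]])
    show "cmod (a2 z * (d z - d2 z)) \<le> cmod (d z - d2 z)" by (rule mult_le1'[OF ua2(1)[OF z]])
    show "cmod ((b z - b2 z) * cnj (c z)) \<le> cmod (b z - b2 z)"
      using mult_le1[of "cnj (c z)" "b z - b2 z"] uc(1)[OF z] by simp
    have "cmod (b2 z * (cnj (c z) - cnj (c2 z))) \<le> cmod (cnj (c z) - cnj (c2 z))"
      using mult_le1'[of "b2 z" "cnj (c z) - cnj (c2 z)"] ua2(2)[OF z] by simp
    also have "cmod (cnj (c z) - cnj (c2 z)) = cmod (c z - c2 z)"
      by (metis complex_cnj_diff complex_mod_cnj)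
    finally show "cmod (b2 z * (cnj (c z) - cnj (c2 z))) \<le> cmod (c z - c2 z)" .
  qed (intro cTs; fail)+
  have lhs: "rho (pmult (nlft F) (nlft G)) (pmult (nlft Ft) (nlft Gt)) =
      L2T_norm (\<lambda>z. (a z * c z - b z * star d z) - (a2 z * c2 z - b2 z * star d2 z))
    + L2T_norm (\<lambda>z. (a z * d z + b z * star c z) - (a2 z * d2 z + b2 z * star c2 z))
    + \<bar>ln (Re (at_inf (\<lambda>z. a z * c z - b z * star d z))) - ln (Re (at_inf (\<lambda>z. a2 z * c2 z - b2 z * star d2 z)))\<bar>"
    unfolding eF eFt eG eGt pmult_def rho_def by simp
  have r1: "rho (nlft F) (nlft Ft) = L2T_norm (\<lambda>z. a z - a2 z) + L2T_norm (\<lambda>z. b z - b2 z)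
      + \<bar>ln (Re (at_inf a)) - ln (Re (at_inf a2))\<bar>"
    unfolding eF eFt rho_def by simp
  have r2: "rho (nlft G) (nlft Gt) = L2T_norm (\<lambda>z. c z - c2 z) + L2T_norm (\<lambda>z. d z - d2 z)
      + \<bar>ln (Re (at_inf c)) - ln (Re (at_inf c2))\<bar>"
    unfolding eG eGt rho_def by simp
  have n1: "0 \<le> \<bar>ln (Re (at_inf a)) - ln (Re (at_inf a2))\<bar>" by simp
  have n2: "0 \<le> \<bar>ln (Re (at_inf c)) - ln (Re (at_inf c2))\<bar>" by simp
  show ?thesis unfolding lhs r1 r2 by (rule final_arith[OF l1 l2 logp n1 n2])
qed


end
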